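(* Let $\pi$ be a uniformizer of $K_P$ and $L/K_P$ a finite extension. The $\pi$-adic $1$-unit character $\langle\cdot\rangle_\pi:K_P^+\to U_P$ extends uniquely to a character $\langle\cdot\rangle_\pi\in\mathbf{S}_L$ (i.e. a character of $L^+$ in $\mathbf{S}_L$ whose restriction to $K_P^+$ is $\langle\cdot\rangle_\pi$) taking values in $U_{\mathbb{C}_P}$.
   Context: $P$ is a closed point of a smooth projective curve over a finite field of characteristic $p$, $K_P$ its completed function field with valuation $v_P$, $\mathbb{C}_P$ the completion of an algebraic closure of $K_P$. For a complete extension $L$, $L^+=L^\times/\mu_L$ ($\mu_L$ = roots of unity in $L$), $U_L$ the $1$-units of $L$, and $U_P=U_{K_P}$. The $\pi$-adic $1$-unit character is $\langle\alpha\rangle_\pi=\alpha/\pi^{v_P(\alpha)}\in U_P$ for $\alpha\in K_P^+$ (well defined on positive numbers). $\mathbf{S}_L$ is the group of homomorphisms $s:L^+\to\mathbb{C}_P^\times$ for which there exists $y(s)\in\mathbb{Z}_p$ with $s(u)=u^{y(s)}$ for all $u\in U_L$. *)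

theory Defs
  imports Complex_Main "HOL-Computational_Algebra.Polynomial"
begin

(* The ambient field type 'a plays the role of C_P; the absolute value a is
   exp(-v) for the (real-valued) valuation v.  Subfields are subsets of 'a. *)

definition nonarch_abs :: "('a::field \<Rightarrow> real) \<Rightarrow> bool" where
  "nonarch_abs a \<longleftrightarrow> (\<forall>x. a x \<ge> 0) \<and> (\<forall>x. a x = 0 \<longleftrightarrow> x = 0)
     \<and> (\<forall>x y. a (x * y) = a x * a y) \<and> (\<forall>x y. a (x + y) \<le> max (a x) (a y))"

definition is_subfield :: "'a::field set \<Rightarrow> bool" where
  "is_subfield F \<longleftrightarrow> 0 \<in> F \<and> 1 \<in> F \<and>
     (\<forall>x\<in>F. \<forall>y\<in>F. x + y \<in> F \<and> x * y \<in> F) \<and> (\<forall>x\<in>F. - x \<in> F \<and> inverse x \<in> F)"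

definition abs_cauchy :: "('a::field \<Rightarrow> real) \<Rightarrow> (nat \<Rightarrow> 'a) \<Rightarrow> bool" where
  "abs_cauchy a X \<longleftrightarrow> (\<forall>e>0. \<exists>N. \<forall>m\<ge>N. \<forall>n\<ge>N. a (X m - X n) < e)"

definition abs_tendsto :: "('a::field \<Rightarrow> real) \<Rightarrow> (nat \<Rightarrow> 'a) \<Rightarrow> 'a \<Rightarrow> bool" where
  "abs_tendsto a X l \<longleftrightarrow> (\<forall>e>0. \<exists>N. \<forall>n\<ge>N. a (X n - l) < e)"

definition abs_complete :: "('a::field \<Rightarrow> real) \<Rightarrow> 'a set \<Rightarrow> bool" where
  "abs_complete a S \<longleftrightarrow>
     (\<forall>X. (\<forall>n. X n \<in> S) \<and> abs_cauchy a X \<longrightarrow> (\<exists>l\<in>S. abs_tendsto a X l))"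

definition alg_closed :: "'a::field itself \<Rightarrow> bool" where
  "alg_closed _ \<longleftrightarrow> (\<forall>q::'a poly. degree q > 0 \<longrightarrow> (\<exists>x. poly q x = 0))"

definition algebraic_over :: "'a::field set \<Rightarrow> 'a \<Rightarrow> bool" where
  "algebraic_over K x \<longleftrightarrow> (\<exists>q. q \<noteq> 0 \<and> (\<forall>i. coeff q i \<in> K) \<and> poly q x = 0)"

definition finite_ext :: "'a::field set \<Rightarrow> 'a set \<Rightarrow> bool" where
  "finite_ext K L \<longleftrightarrow> (\<exists>B. finite B \<and> B \<subseteq> L \<and>
      L = {\<Sum>b\<in>B. c b * b | c. \<forall>b\<in>B. c b \<in> K})"

definition uniformizer :: "('a::field \<Rightarrow> real) \<Rightarrow> 'a set \<Rightarrow> 'a \<Rightarrow> bool" where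
  "uniformizer a K \<pi> \<longleftrightarrow> \<pi> \<in> K \<and> 0 < a \<pi> \<and> a \<pi> < 1 \<and>
     (\<forall>x\<in>K - {0}. \<exists>n::int. a x = a \<pi> powi n)"

definition finite_residue :: "('a::field \<Rightarrow> real) \<Rightarrow> 'a set \<Rightarrow> bool" where
  "finite_residue a K \<longleftrightarrow> (\<exists>R. finite R \<and> R \<subseteq> K \<and>
     (\<forall>x\<in>K. a x \<le> 1 \<longrightarrow> (\<exists>r\<in>R. a (x - r) < 1)))"

definition roots_of_unity :: "'a::field set \<Rightarrow> 'a set" where
  "roots_of_unity S = {z\<in>S. \<exists>m::nat. m > 0 \<and> z ^ m = 1}"

definition one_units :: "('a::field \<Rightarrow> real) \<Rightarrow> 'a set \<Rightarrow> 'a set" where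
  "one_units a S = {u\<in>S. a (u - 1) < 1}"

definition pi_char :: "('a::field \<Rightarrow> real) \<Rightarrow> 'a set \<Rightarrow> 'a \<Rightarrow> 'a \<Rightarrow> 'a" where
  "pi_char a K \<pi> \<alpha> = (THE u. u \<in> one_units a K \<and>
      (\<exists>n::int. \<exists>\<zeta>\<in>roots_of_unity K. \<alpha> = \<zeta> * \<pi> powi n * u))"

(* p-adic integers as compatible sequences of residues mod p^n *)
definition zp :: "nat \<Rightarrow> (nat \<Rightarrow> int) set" where
  "zp p = {y. \<forall>n. 0 \<le> y n \<and> y n < int p ^ n \<and> y (Suc n) mod (int p ^ n) = y n}"

(* the group S_L: homomorphisms L^+ = L^x / mu_L \<rightarrow> C_P^x which on 1-units are u \<mapsto> u^y, y in Z_p *)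
definition char_S :: "('a::field \<Rightarrow> real) \<Rightarrow> nat \<Rightarrow> 'a set \<Rightarrow> ('a \<Rightarrow> 'a) \<Rightarrow> bool" where
  "char_S a p L s \<longleftrightarrow> (\<forall>x\<in>L - {0}. s x \<noteq> 0) \<and>
     (\<forall>x\<in>L - {0}. \<forall>y\<in>L - {0}. s (x * y) = s x * s y) \<and>
     (\<forall>\<zeta>\<in>roots_of_unity L. s \<zeta> = 1) \<and>
     (\<exists>y\<in>zp p. \<forall>u\<in>one_units a L. abs_tendsto a (\<lambda>n. u ^ nat (y n)) (s u))"

end

theory Submission
  imports Defs "HOL-Computational_Algebra.Primes" "HOL-Library.FuncSet"
begin

locale nabs =
  fixes a :: "'a::field \<Rightarrow> real"
  assumes na: "nonarch_abs a"
begin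

lemma nonneg[simp]: "a x \<ge> 0" using na unfolding nonarch_abs_def by blast
lemma zero_iff[simp]: "a x = 0 \<longleftrightarrow> x = 0" using na unfolding nonarch_abs_def by blast
lemma mult[simp]: "a (x * y) = a x * a y" using na unfolding nonarch_abs_def by blast
lemma ultra: "a (x + y) \<le> max (a x) (a y)" using na unfolding nonarch_abs_def by blast
lemma a0[simp]: "a 0 = 0" by simp
lemma pos[simp]: "a x > 0 \<longleftrightarrow> x \<noteq> 0" using nonneg[of x] zero_iff[of x] by linarith

lemma one[simp]: "a 1 = 1"
proof -
  have "a 1 = a 1 * a 1" using mult[of 1 1] by simp
  moreover have "a 1 \<noteq> 0" by simp
  ultimately show ?thesis by (metis mult_cancel_left1)
qed

lemma minus[simp]: "a (- x) = a x"
proof -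
  have "a (-1) * a (-1) = 1" using mult[of "-1" "-1"] by simp
  moreover have "a (-1) \<ge> 0" by simp
  ultimately have "a (-1) = 1" by (metis abs_of_nonneg abs_square_eq_1 power2_eq_square)
  thus ?thesis using mult[of "-1" x] by simp
qed

lemma diff_comm: "a (x - y) = a (y - x)"
  by (metis minus minus_diff_eq)

lemma power[simp]: "a (x ^ n) = a x ^ n"
  by (induct n) simp_all

lemma inverse[simp]: "a (inverse x) = inverse (a x)"
proof (cases "x = 0")
  case False
  have "a x * a (inverse x) = 1" using mult[of x "inverse x"] False by simp
  thus ?thesis by (metis inverse_unique)
qed simp

lemma divide[simp]: "a (x / y) = a x / a y"
  by (simp add: divide_inverse)

lemma powi[simp]: "a (x powi k) = a x powi k"
  by (simp add: power_int_def)

lemma ultra_diff: "a (x - y) \<le> max (a x) (a y)"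
  using ultra[of x "-y"] by simp

lemma strict: assumes "a y < a x" shows "a (x + y) = a x"
proof -
  have "a x \<le> max (a (x + y)) (a (- y))" using ultra[of "x + y" "-y"] by simp
  hence "a x \<le> a (x + y)" using assms by simp
  moreover have "a (x + y) \<le> a x" using ultra[of x y] assms by linarith
  ultimately show ?thesis by linarith
qed

lemma sum_le: assumes "\<And>i. i \<in> S \<Longrightarrow> a (f i) \<le> r" "0 \<le> r" shows "a (sum f S) \<le> r"
  using assms
proof (induct S rule: infinite_finite_induct)
  case (insert x F)
  have "a (f x) \<le> r" "a (sum f F) \<le> r" using insert by auto
  then show ?case using ultra[of "f x" "sum f F"] insert(1,2) by simp
qed auto

lemma sum_less: assumes "\<And>i. i \<in> S \<Longrightarrow> a (f i) < r" "0 < r" shows "a (sum f S) < r"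
  using assms
proof (induct S rule: infinite_finite_induct)
  case (insert x F)
  have "a (f x) < r" "a (sum f F) < r" using insert by auto
  then show ?case using ultra[of "f x" "sum f F"] insert(1,2) by simp
qed auto

lemma of_nat_le: "a (of_nat n) \<le> 1"
proof (induct n)
  case (Suc n)
  then show ?case using ultra[of 1 "of_nat n"] by simp
qed simp

lemma unit_of_1unit: assumes "a (u - 1) < 1" shows "a u = 1"
  using strict[of "u - 1" 1] assms by simp

lemma oneunit_pow_le: assumes "a (u - 1) < 1" shows "a (u ^ k - 1) \<le> a (u - 1)"
proof -
  have "a (\<Sum>i<k. u ^ i) \<le> 1" by (rule sum_le) (use unit_of_1unit[OF assms] in auto)
  hence "a (u - 1) * a (\<Sum>i<k. u ^ i) \<le> a (u - 1)"
    by (simp add: mult_left_le)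
  thus ?thesis by (simp add: power_diff_1_eq)
qed

lemma oneunit_mult: assumes "a (u - 1) < 1" "a (v - 1) < 1" shows "a (u * v - 1) < 1"
proof -
  have e: "u * v - 1 = u * (v - 1) + (u - 1)" by (simp add: algebra_simps)
  have "a (u * (v - 1)) < 1" using assms unit_of_1unit[OF assms(1)] by simp
  hence "a (u * (v - 1) + (u - 1)) < 1" using ultra[of "u * (v - 1)" "u - 1"] assms(1) by linarith
  thus ?thesis by (subst e)
qed

lemma oneunit_div: assumes "a (u - 1) < 1" "a (v - 1) < 1" shows "a (u / v - 1) < 1"
proof -
  have "v \<noteq> 0" using unit_of_1unit[OF assms(2)] by auto
  hence "u / v - 1 = ((u - 1) - (v - 1)) / v" by (simp add: field_simps)
  thus ?thesis using ultra_diff[of "u - 1" "v - 1"] assms unit_of_1unit[OF assms(2)] by auto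
qed

lemma oneunit_pow: assumes "a (u - 1) < 1" shows "a (u ^ k - 1) < 1"
  using oneunit_pow_le[OF assms, of k] assms by linarith

end

locale nabsp = nabs a for a :: "'a::field \<Rightarrow> real" +
  fixes p :: nat
  assumes prime: "prime p" and char: "CHAR('a::field) = p"
begin

lemma frob: "(x + y :: 'a) ^ (p ^ e) = x ^ (p ^ e) + y ^ (p ^ e)"
  using freshmans_dream'[of "p ^ e" e x y] prime char by simp

lemma frob1: "(u::'a) ^ (p ^ e) - 1 = (u - 1) ^ (p ^ e)"
  using frob[of "u - 1" 1 e] by simp

lemma of_nat_mod: "(of_nat n :: 'a) = of_nat (n mod p)"
proof -
  have "(of_nat n :: 'a) = of_nat (n mod p) + of_nat p * of_nat (n div p)"
    by (metis mod_mult_div_eq of_nat_add of_nat_mult add.commute)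
  moreover have "(of_nat p :: 'a) = 0" using char of_nat_CHAR by metis
  ultimately show ?thesis by simp
qed

lemma of_nat_unit: assumes "\<not> p dvd b" shows "a (of_nat b) = 1"
proof -
  define x :: 'a where "x = of_nat b"
  have "(\<lambda>i. x ^ i) ` UNIV \<subseteq> of_nat ` {..<p}"
  proof
    fix y assume "y \<in> (\<lambda>i. x ^ i) ` UNIV"
    then obtain i where "y = x ^ i" by blast
    hence "y = of_nat ((b ^ i) mod p)" unfolding x_def using of_nat_mod by (metis of_nat_power)
    moreover have "(b ^ i) mod p < p" using prime prime_gt_0_nat by auto
    ultimately show "y \<in> of_nat ` {..<p}" by blast
  qed
  hence "finite (range (\<lambda>i. x ^ i))" using finite_subset by blast
  hence "\<not> inj (\<lambda>i. x ^ i)" using infinite_UNIV_nat finite_imageD by blast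
  then obtain i j where ij: "x ^ i = x ^ j" "i \<noteq> j" unfolding inj_def by blast
  have x0: "x \<noteq> 0" unfolding x_def using of_nat_eq_0_iff_char_dvd[where 'a='a] char assms by simp
  have "\<exists>i j. x ^ i = x ^ j \<and> i < j" using ij by (metis linorder_neqE_nat)
  then obtain i j where ij: "x ^ i = x ^ j" "i < j" by blast
  hence "x ^ i * x ^ (j - i) = x ^ i * 1" by (metis le_add_diff_inverse less_imp_le power_add mult_1_right)
  hence "x ^ (j - i) = 1" using x0 by simp
  hence "a x ^ (j - i) = 1 ^ (j - i)" by (metis power one power_one)
  hence "a x = 1" using power_eq_imp_eq_base[of "a x" "j - i" 1] ij(2) by simp
  thus ?thesis unfolding x_def .
qed

lemma geom_unit: assumes "a (u - 1) < 1" "\<not> p dvd b" shows "a (\<Sum>i<b. u ^ i) = 1"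
proof -
  have "(\<Sum>i<b. u ^ i) = of_nat b + (\<Sum>i<b. u ^ i - 1)" by (simp add: sum_subtractf)
  moreover have "a (\<Sum>i<b. u ^ i - 1) < 1" by (rule sum_less) (use oneunit_pow[OF assms(1)] in auto)
  ultimately show ?thesis using strict of_nat_unit[OF assms(2)] by simp
qed

lemma KLp: assumes "a (u - 1) < 1" "\<not> p dvd b" shows "a (u ^ (p ^ e * b) - 1) = a (u - 1) ^ (p ^ e)"
proof -
  have "u ^ (p ^ e * b) - 1 = (u ^ b - 1) ^ (p ^ e)"
    by (metis frob1 mult.commute power_mult)
  moreover have "a (u ^ b - 1) = a (u - 1)"
    using geom_unit[OF assms] by (simp add: power_diff_1_eq)
  ultimately show ?thesis by simp
qed

lemma decomp: assumes "t > 0" shows "\<exists>e b. t = p ^ e * b \<and> \<not> p dvd b"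
  using assms
proof (induct t rule: less_induct)
  case (less t)
  show ?case
  proof (cases "p dvd t")
    case True
    then obtain t' where t': "t = p * t'" by blast
    have "t' < t" "t' > 0" using less(2) t' prime prime_gt_1_nat by auto
    then obtain e b where "t' = p ^ e * b" "\<not> p dvd b" using less(1) by blast
    then show ?thesis using t' by (intro exI[of _ "Suc e"] exI[of _ b]) auto
  next
    case False
    then show ?thesis by (intro exI[of _ 0] exI[of _ t]) auto
  qed
qed

lemma lemmaA: assumes "a (u - 1) < 1" "u ^ m = 1" "m > 0" shows "u = 1"
proof -
  obtain e b where eb: "m = p ^ e * b" "\<not> p dvd b" using decomp[OF assms(3)] by blast
  have "a (u - 1) ^ (p ^ e) = 0" using KLp[OF assms(1) eb(2), of e] eb assms(2) by simp
  thus ?thesis by simp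
qed

end


context nabs
begin

lemma root_small_aux:
  assumes ac: "alg_closed TYPE('a)"
  shows "degree g = n \<Longrightarrow> n > 0 \<Longrightarrow> a (coeff g 0) < a (lead_coeff g) \<Longrightarrow> \<exists>r. poly g r = 0 \<and> a r < 1"
proof (induct n arbitrary: g)
  case 0
  then show ?case by simp
next
  case (Suc n)
  have "degree g > 0" using Suc(2) by simp
  then obtain r0 where r0: "poly g r0 = 0" using ac unfolding alg_closed_def by blast
  show ?case
  proof (cases "a r0 < 1")
    case True
    then show ?thesis using r0 by blast
  next
    case False
    have "[:-r0, 1:] dvd g" using r0 by (simp add: poly_eq_0_iff_dvd)
    then obtain h where h: "g = [:-r0, 1:] * h" by (elim dvdE)
    have g0: "g \<noteq> 0" using Suc(2) by auto
    hence h0: "h \<noteq> 0" using h by auto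
    have "[:-r0, 1:] \<noteq> 0" by simp
    hence "degree g = degree [:-r0, 1:] + degree h" using h h0 degree_mult_eq by metis
    hence dg: "degree g = Suc (degree h)" by simp
    have "lead_coeff g = lead_coeff [:-r0, 1:] * lead_coeff h" using h lead_coeff_mult by metis
    hence lg: "lead_coeff g = lead_coeff h" by simp
    have cg: "coeff g 0 = - r0 * coeff h 0" using h by (simp add: coeff_mult_0)
    have "a (coeff h 0) \<le> a (coeff g 0)"
    proof -
      have "1 * a (coeff h 0) \<le> a r0 * a (coeff h 0)" using False by (intro mult_right_mono) auto
      thus ?thesis using cg by simp
    qed
    hence lt: "a (coeff h 0) < a (lead_coeff h)" using Suc(4) lg by simp
    have "degree h = n" using dg Suc(2) by simp
    moreover have "n > 0"
    proof (rule ccontr)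
      assume "\<not> n > 0"
      hence "degree h = 0" using \<open>degree h = n\<close> by simp
      thus False using lt by simp
    qed
    ultimately obtain r where r: "poly h r = 0" "a r < 1" using Suc(1)[of h] lt by blast
    have "poly g r = 0" using h r by simp
    then show ?thesis using r by blast
  qed
qed

lemma root_1unit:
  assumes ac: "alg_closed TYPE('a)" and u: "a (u - 1) < 1" and N: "N > 0"
  shows "\<exists>w. a (w - 1) < 1 \<and> w ^ N = u"
proof -
  define q :: "'a poly" where "q = [:1, 1:] ^ N"
  define g where "g = q + [:-u:]"
  have dq: "degree q = N" unfolding q_def by (simp add: degree_power_eq)
  have lq: "coeff q N = 1" using dq unfolding q_def by (metis lead_coeff_power lead_coeff_pCons(1) one_neq_zero lead_coeff_1 pCons_one power_one degree_power_eq)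
  have dg: "degree g = N" unfolding g_def using dq N by (simp add: degree_add_eq_left)
  have lg: "lead_coeff g = 1" using dg lq N unfolding g_def by (cases N) simp_all
  have cg: "coeff g 0 = 1 - u" unfolding g_def q_def by (simp add: coeff_0_power)
  have "a (coeff g 0) < a (lead_coeff g)" using cg lg u diff_comm[of 1 u] by simp
  then obtain t where t: "poly g t = 0" "a t < 1" using root_small_aux[OF ac dg N] by blast
  have "(1 + t) ^ N = u" using t(1) unfolding g_def q_def by (simp add: poly_power algebra_simps)
  thus ?thesis using t(2) by (intro exI[of _ "1 + t"]) simp
qed

end


lemma sf_0: "is_subfield K \<Longrightarrow> 0 \<in> K" unfolding is_subfield_def by blast
lemma sf_1: "is_subfield K \<Longrightarrow> 1 \<in> K" unfolding is_subfield_def by blast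
lemma sf_add: "is_subfield K \<Longrightarrow> x \<in> K \<Longrightarrow> y \<in> K \<Longrightarrow> x + y \<in> K" unfolding is_subfield_def by blast
lemma sf_mult: "is_subfield K \<Longrightarrow> x \<in> K \<Longrightarrow> y \<in> K \<Longrightarrow> x * y \<in> K" unfolding is_subfield_def by blast
lemma sf_uminus: "is_subfield K \<Longrightarrow> x \<in> K \<Longrightarrow> - x \<in> K" unfolding is_subfield_def by blast
lemma sf_inverse: "is_subfield K \<Longrightarrow> x \<in> K \<Longrightarrow> inverse x \<in> K" unfolding is_subfield_def by blast
lemma sf_diff: "is_subfield K \<Longrightarrow> x \<in> K \<Longrightarrow> y \<in> K \<Longrightarrow> x - y \<in> K"
  using sf_add[of K x "- y"] sf_uminus[of K y] by simp
lemma sf_divide: "is_subfield K \<Longrightarrow> x \<in> K \<Longrightarrow> y \<in> K \<Longrightarrow> x / y \<in> K"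
  using sf_mult[of K x "inverse y"] sf_inverse[of K y] by (simp add: divide_inverse)
lemma sf_power: "is_subfield K \<Longrightarrow> x \<in> K \<Longrightarrow> x ^ n \<in> K"
  by (induct n) (auto intro: sf_1 sf_mult)
lemma sf_powi: "is_subfield K \<Longrightarrow> x \<in> K \<Longrightarrow> x powi n \<in> K"
  by (auto simp: power_int_def intro: sf_power sf_inverse)
lemma sf_sum: "is_subfield K \<Longrightarrow> (\<And>i. i \<in> S \<Longrightarrow> f i \<in> K) \<Longrightarrow> sum f S \<in> K"
  by (induct S rule: infinite_finite_induct) (auto intro: sf_0 sf_add)

lemma steinitz:
  fixes K :: "'a::field set" and v :: "'i \<Rightarrow> 'a"
  assumes K: "is_subfield K" and B: "finite B"
  shows "finite I \<Longrightarrow> card I > card B \<Longrightarrow>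
    (\<forall>i\<in>I. \<exists>c. (\<forall>b\<in>B. c b \<in> K) \<and> v i = (\<Sum>b\<in>B. c b * b)) \<Longrightarrow>
    \<exists>c. (\<forall>i\<in>I. c i \<in> K) \<and> (\<exists>i\<in>I. c i \<noteq> 0) \<and> (\<Sum>i\<in>I. c i * v i) = 0"
  using B
proof (induct B arbitrary: I v rule: finite_induct)
  case empty
  then show ?case using sf_1[OF K] by (intro exI[of _ "\<lambda>_. 1"]) (auto simp: card_gt_0_iff)
next
  case (insert b B)
  obtain C where C: "\<forall>i\<in>I. (\<forall>b'\<in>insert b B. C i b' \<in> K) \<and> v i = (\<Sum>b'\<in>insert b B. C i b' * b')"
    using insert(6) by metis
  have vi: "v i = C i b * b + (\<Sum>b'\<in>B. C i b' * b')" if "i \<in> I" for i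
    using C that insert(1,2) by simp
  show ?case
  proof (cases "\<forall>i\<in>I. C i b = 0")
    case True
    have "\<forall>i\<in>I. \<exists>c. (\<forall>b\<in>B. c b \<in> K) \<and> v i = (\<Sum>b\<in>B. c b * b)"
      using True vi C by (intro ballI exI[of _ "C _"]) auto
    moreover have "card I > card B" using insert by simp
    ultimately show ?thesis using insert(3)[of I v] insert(4) by blast
  next
    case False
    then obtain j where j: "j \<in> I" "C j b \<noteq> 0" by blast
    define t where "t i = C i b / C j b" for i
    define w where "w i = v i - t i * v j" for i
    define D where "D i b' = C i b' - t i * C j b'" for i b'
    have tK: "t i \<in> K" if "i \<in> I" for i
      unfolding t_def using C that j sf_divide[OF K] by blast
    have wsp: "\<forall>i\<in>I - {j}. \<exists>c. (\<forall>b\<in>B. c b \<in> K) \<and> w i = (\<Sum>b\<in>B. c b * b)"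
    proof
      fix i assume i: "i \<in> I - {j}"
      have "w i = (C i b - t i * C j b) * b + (\<Sum>b'\<in>B. D i b' * b')"
        unfolding w_def D_def using vi[of i] vi[of j] i j
        by (simp add: algebra_simps sum_subtractf sum_distrib_left)
      moreover have "C i b - t i * C j b = 0" unfolding t_def using j by simp
      moreover have "\<forall>b'\<in>B. D i b' \<in> K" unfolding D_def
        using C i j tK[of i] sf_diff[OF K] sf_mult[OF K] by simp
      ultimately show "\<exists>c. (\<forall>b\<in>B. c b \<in> K) \<and> w i = (\<Sum>b\<in>B. c b * b)" by auto
    qed
    have "card (I - {j}) > card B" using insert j by simp
    moreover have "finite (I - {j})" using insert by simp
    ultimately obtain d where d: "\<forall>i\<in>I - {j}. d i \<in> K" "\<exists>i\<in>I - {j}. d i \<noteq> 0"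
      "(\<Sum>i\<in>I - {j}. d i * w i) = 0"
      using insert(3)[of "I - {j}" w] wsp by blast
    define c where "c = d(j := - (\<Sum>i\<in>I - {j}. d i * t i))"
    have "(\<Sum>i\<in>I - {j}. d i * t i) \<in> K"
      using d(1) tK by (intro sf_sum[OF K] sf_mult[OF K]) auto
    hence "\<forall>i\<in>I. c i \<in> K"
      unfolding c_def using d(1) sf_uminus[OF K] by auto
    moreover have "\<exists>i\<in>I. c i \<noteq> 0" using d(2) unfolding c_def by auto
    moreover have "(\<Sum>i\<in>I. c i * v i) = 0"
    proof -
      have I: "I = insert j (I - {j})" using j by blast
      have "(\<Sum>i\<in>I. c i * v i) = c j * v j + (\<Sum>i\<in>I - {j}. c i * v i)"
        using insert(4) by (subst I) (simp add: sum.insert_remove)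
      also have "(\<Sum>i\<in>I - {j}. c i * v i) = (\<Sum>i\<in>I - {j}. d i * v i)"
        unfolding c_def by (intro sum.cong) auto
      also have "c j * v j = - (\<Sum>i\<in>I - {j}. d i * t i * v j)"
        unfolding c_def by (simp add: sum_distrib_right)
      finally have "(\<Sum>i\<in>I. c i * v i) = (\<Sum>i\<in>I - {j}. d i * w i)"
        unfolding w_def by (simp add: algebra_simps sum_subtractf sum_distrib_left)
      thus ?thesis using d(3) by simp
    qed
    ultimately show ?thesis by blast
  qed
qed


context nabs
begin

lemma coeff_sdiv: "coeff (synthetic_div f c) k = coeff f (Suc k) + c * coeff (synthetic_div f c) (Suc k)"
proof -
  have "coeff (f + smult c (synthetic_div f c)) (Suc k) = coeff (pCons (poly f c) (synthetic_div f c)) (Suc k)"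
    using synthetic_div_correct[of f c] by simp
  thus ?thesis by simp
qed

lemma poly_small:
  assumes "\<forall>i. a (coeff f i) < 1" "a y \<le> 1"
  shows "a (poly f y) < 1"
proof -
  have "a (\<Sum>i\<le>degree f. coeff f i * y ^ i) < 1"
  proof (rule sum_less)
    fix i
    have "a (coeff f i) * a y ^ i \<le> a (coeff f i) * 1"
      using assms(2) by (intro mult_left_mono power_le_one) auto
    thus "a (coeff f i * y ^ i) < 1" using assms(1)[rule_format, of i] by simp
  qed simp
  thus ?thesis by (simp add: poly_altdef)
qed

lemma ARC:
  "(\<forall>i. a (coeff f i) \<le> 1) \<Longrightarrow> a (coeff f d) = 1 \<Longrightarrow> (\<forall>i>d. a (coeff f i) < 1) \<Longrightarrow> finite Y \<Longrightarrow>
   (\<forall>y\<in>Y. a y \<le> 1 \<and> a (poly f y) < 1) \<Longrightarrow> (\<forall>y\<in>Y. \<forall>y'\<in>Y. y \<noteq> y' \<longrightarrow> \<not> a (y - y') < 1) \<Longrightarrow>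
   card Y \<le> d"
proof (induct d arbitrary: f Y)
  case 0
  have "Y = {}"
  proof (rule ccontr)
    assume "Y \<noteq> {}"
    then obtain y where y: "y \<in> Y" by blast
    obtain c0 f' where f: "f = pCons c0 f'" by (cases f) blast
    have "\<forall>i. a (coeff f' i) < 1"
    proof
      fix i show "a (coeff f' i) < 1" using 0(3)[rule_format, of "Suc i"] f by simp
    qed
    hence "a (poly f' y) < 1" using poly_small y 0(5) by blast
    hence "a (y * poly f' y) < 1" using y 0(5)
      by (simp add: mult_le_less_imp_less) (metis mult_left_le_one_le nonneg order.strict_trans1)
    moreover have "a c0 = 1" using 0(2) f by simp
    ultimately have "a (c0 + y * poly f' y) = 1" using strict by simp
    moreover have "a (c0 + y * poly f' y) < 1" using f y 0(5) by auto
    ultimately show False by simp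
  qed
  thus ?case by simp
next
  case (Suc d)
  show ?case
  proof (cases "Y = {}")
    case True thus ?thesis by simp
  next
    case False
    then obtain y0 where y0: "y0 \<in> Y" by blast
    define g where "g = synthetic_div f y0"
    have pf: "poly f y = (y - y0) * poly g y + poly f y0" for y
    proof -
      have "poly ([:-y0, 1:] * g + [:poly f y0:]) y = poly f y"
        unfolding g_def by (subst synthetic_div_correct') simp
      thus ?thesis by (simp add: algebra_simps)
    qed
    have cg: "coeff g k = coeff f (Suc k) + y0 * coeff g (Suc k)" for k
      unfolding g_def by (rule coeff_sdiv)
    have ay0: "a y0 \<le> 1" using Suc(6) y0 by blast
    define P where "P k \<longleftrightarrow> a (coeff g k) \<le> 1 \<and> (k > d \<longrightarrow> a (coeff g k) < 1)" for k
    have Pstep: "P k" if "P (Suc k)" for k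
    proof -
      have h1: "a (y0 * coeff g (Suc k)) \<le> 1" using that ay0 unfolding P_def
        by (simp add: mult_le_one)
      have "a (coeff g k) \<le> 1" using cg[of k] ultra[of "coeff f (Suc k)" "y0 * coeff g (Suc k)"]
        h1 Suc(2) by (metis max.bounded_iff order_trans)
      moreover have "a (coeff g k) < 1" if "k > d"
      proof -
        have "a (coeff g (Suc k)) < 1" using \<open>P (Suc k)\<close> that unfolding P_def by simp
        hence "a (y0 * coeff g (Suc k)) < 1" using ay0
          by simp (metis mult_left_le_one_le nonneg order.strict_trans1)
        moreover have "a (coeff f (Suc k)) < 1" using Suc(4) that by simp
        ultimately show ?thesis using cg[of k] ultra[of "coeff f (Suc k)" "y0 * coeff g (Suc k)"] by simp
      qed
      ultimately show ?thesis unfolding P_def by blast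
    qed
    have cz: "coeff g k = 0" if "k \<ge> degree f" for k
    proof (cases "degree f = 0")
      case True
      hence "synthetic_div f y0 = 0" using synthetic_div_eq_0_iff by blast
      thus ?thesis unfolding g_def by simp
    next
      case False thus ?thesis unfolding g_def
        using that by (intro coeff_eq_0) (simp add: degree_synthetic_div)
    qed
    have Pall: "P k" for k
    proof (cases "k \<ge> degree f")
      case True
      thus ?thesis using cz unfolding P_def by simp
    next
      case False
      have "P (degree f)" using cz unfolding P_def by simp
      show ?thesis
        by (rule inc_induct[of k "degree f" P]) (use False \<open>P (degree f)\<close> Pstep in auto)
    qed
    have g1: "\<forall>i. a (coeff g i) \<le> 1" using Pall unfolding P_def by blast
    have g3: "\<forall>i>d. a (coeff g i) < 1" using Pall unfolding P_def by blast
    have g2: "a (coeff g d) = 1"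
    proof -
      have "a (y0 * coeff g (Suc d)) < 1" using g3 ay0
        by simp (metis lessI mult_left_le_one_le nonneg order.strict_trans1)
      hence "a (coeff f (Suc d) + y0 * coeff g (Suc d)) = 1" using strict Suc(3) by simp
      thus ?thesis using cg[of d] by simp
    qed
    have Y': "\<forall>y\<in>Y - {y0}. a y \<le> 1 \<and> a (poly g y) < 1"
    proof
      fix y assume y: "y \<in> Y - {y0}"
      have ay: "a y \<le> 1" using y Suc(6) by blast
      have "\<not> a (y - y0) < 1" using y y0 Suc(7) by blast
      moreover have "a (y - y0) \<le> 1" using ultra_diff[of y y0] ay ay0 by simp
      ultimately have d1: "a (y - y0) = 1" by simp
      have "a (poly f y) < 1" "a (poly f y0) < 1" using y y0 Suc(6) by auto
      hence "a (poly f y - poly f y0) < 1"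
        using ultra_diff[of "poly f y" "poly f y0"] by simp
      hence "a ((y - y0) * poly g y) < 1" using pf[of y] by simp
      thus "a y \<le> 1 \<and> a (poly g y) < 1" using d1 ay by simp
    qed
    have "card (Y - {y0}) \<le> d"
      using Suc(1)[OF g1 g2 g3 _ Y'] Suc(5,7) by blast
    thus ?thesis using Suc(5) y0 by (simp add: card_Diff_singleton)
  qed
qed

end


locale setting = nabsp a p for a :: "'a::field \<Rightarrow> real" and p +
  fixes K L :: "'a set" and \<pi> :: 'a and B R :: "'a set"
  assumes K: "is_subfield K" and L: "is_subfield L" and KL: "K \<subseteq> L"
    and unif: "uniformizer a K \<pi>" and compK: "abs_complete a K" and ac: "alg_closed TYPE('a)"
    and B: "finite B" and LB: "L = {\<Sum>b\<in>B. c b * b | c. \<forall>b\<in>B. c b \<in> K}"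
    and R: "finite R" "R \<subseteq> K" and Rres: "\<forall>x\<in>K. a x \<le> 1 \<longrightarrow> (\<exists>r\<in>R. a (x - r) < 1)"
begin

lemma piK: "\<pi> \<in> K" using unif unfolding uniformizer_def by blast
lemma pi_pos: "0 < a \<pi>" using unif unfolding uniformizer_def by blast
lemma pi_lt1: "a \<pi> < 1" using unif unfolding uniformizer_def by blast
lemma pi_val: "x \<in> K \<Longrightarrow> x \<noteq> 0 \<Longrightarrow> \<exists>k::int. a x = a \<pi> powi k"
  using unif unfolding uniformizer_def by blast
lemma pi_nz: "\<pi> \<noteq> 0" using pi_pos by simp

lemma powi_inj: "a \<pi> powi k = a \<pi> powi k' \<Longrightarrow> k = k'"
proof (rule ccontr)
  assume h: "a \<pi> powi k = a \<pi> powi k'" "k \<noteq> k'"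
  { fix k k' :: int assume "k < k'"
    hence "a \<pi> powi k' < a \<pi> powi k" using pi_pos pi_lt1 by (simp add: power_int_strict_decreasing)
  } note * = this
  show False using h *[of k k'] *[of k' k] by (cases "k < k'") auto
qed

definition nB where "nB = card B"

lemma powers_dep: assumes "y \<in> L"
  shows "\<exists>c. (\<forall>i\<le>nB. c i \<in> K) \<and> (\<exists>i\<le>nB. c i \<noteq> 0) \<and> (\<Sum>i\<le>nB. c i * y ^ i) = 0"
proof -
  have "\<forall>i\<in>{..nB}. \<exists>c. (\<forall>b\<in>B. c b \<in> K) \<and> y ^ i = (\<Sum>b\<in>B. c b * b)"
  proof
    fix i
    have "y ^ i \<in> L" using sf_power[OF L assms] .
    thus "\<exists>c. (\<forall>b\<in>B. c b \<in> K) \<and> y ^ i = (\<Sum>b\<in>B. c b * b)" using LB by blast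
  qed
  moreover have "card {..nB} > card B" unfolding nB_def by simp
  ultimately show ?thesis using steinitz[OF K B, of "{..nB}" "\<lambda>i. y ^ i"] by auto
qed

lemma val_rat: assumes y: "y \<in> L" "y \<noteq> 0"
  shows "\<exists>m>0. \<exists>k::int. a y ^ m = a \<pi> powi k"
proof -
  obtain c where c: "\<forall>i\<le>nB. c i \<in> K" "\<exists>i\<le>nB. c i \<noteq> 0" "(\<Sum>i\<le>nB. c i * y ^ i) = 0"
    using powers_dep[OF y(1)] by blast
  define T where "T i = a (c i) * a y ^ i" for i
  define M where "M = Max (T ` {..nB})"
  have Tle: "T i \<le> M" if "i \<le> nB" for i unfolding M_def using that by (intro Max_ge) auto
  have "M \<in> T ` {..nB}" unfolding M_def by (intro Max_in) auto
  then obtain i0 where i0: "i0 \<le> nB" "T i0 = M" by auto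
  obtain i1 where i1: "i1 \<le> nB" "c i1 \<noteq> 0" using c(2) by blast
  have "T i1 > 0" unfolding T_def using i1 y by simp
  hence Mpos: "M > 0" using Tle[OF i1(1)] by simp
  have Tc: "c i \<noteq> 0" if "T i = M" for i using that Mpos unfolding T_def by auto
  have "\<exists>i j. i < j \<and> j \<le> nB \<and> T i = M \<and> T j = M"
  proof (rule ccontr)
    assume nex: "\<not> ?thesis"
    have lt: "T i < M" if "i \<le> nB" "i \<noteq> i0" for i
    proof -
      have "T i \<noteq> M"
      proof
        assume "T i = M"
        show False
        proof (cases "i < i0")
          case True thus False using nex i0 \<open>T i = M\<close> by blast
        next
          case False hence "i0 < i" using that(2) by simp
          thus False using nex i0 \<open>T i = M\<close> that(1) by blast
        qed
      qed
      thus ?thesis using Tle[OF that(1)] by simp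
    qed
    have "(\<Sum>i\<le>nB. c i * y ^ i) = c i0 * y ^ i0 + (\<Sum>i\<in>{..nB} - {i0}. c i * y ^ i)"
      using i0(1) by (simp add: sum.remove)
    moreover have "a (\<Sum>i\<in>{..nB} - {i0}. c i * y ^ i) < M"
      using lt Mpos by (intro sum_less) (auto simp: T_def)
    moreover have "a (c i0 * y ^ i0) = M" using i0 unfolding T_def by simp
    ultimately have "a (\<Sum>i\<le>nB. c i * y ^ i) = M" using strict by simp
    thus False using c(3) Mpos by simp
  qed
  then obtain i j where ij: "i < j" "j \<le> nB" "T i = M" "T j = M" by blast
  have ci: "c i \<noteq> 0" "c j \<noteq> 0" using Tc ij by auto
  have "c i / c j \<in> K" using c(1) ij sf_divide[OF K] by simp
  moreover have "c i / c j \<noteq> 0" using ci by simp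
  ultimately obtain k where k: "a (c i / c j) = a \<pi> powi k" using pi_val by blast
  have "a (c i) * a y ^ i = a (c j) * (a y ^ i * a y ^ (j - i))"
    using ij unfolding T_def by (simp flip: power_add)
  hence "a y ^ (j - i) = a (c i) / a (c j)" using ci y by (simp add: field_simps)
  hence "a y ^ (j - i) = a \<pi> powi k" using k by simp
  thus ?thesis using ij by (intro exI[of _ "j - i"]) auto
qed

end


context setting
begin

lemma red: assumes z: "z \<in> L" "a z = 1"
  shows "\<exists>r\<in>PiE {..nB} (\<lambda>_. R). (\<forall>i\<le>nB. a (r i) \<le> 1) \<and>
     (\<exists>d\<le>nB. a (r d) = 1 \<and> (\<forall>i. d < i \<and> i \<le> nB \<longrightarrow> a (r i) < 1)) \<and>
     a (\<Sum>i\<le>nB. r i * z ^ i) < 1"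
proof -
  obtain c where c: "\<forall>i\<le>nB. c i \<in> K" "\<exists>i\<le>nB. c i \<noteq> 0" "(\<Sum>i\<le>nB. c i * z ^ i) = 0"
    using powers_dep[OF z(1)] by blast
  define M where "M = Max ((\<lambda>i. a (c i)) ` {..nB})"
  have Mge: "a (c i) \<le> M" if "i \<le> nB" for i unfolding M_def using that by (intro Max_ge) auto
  have "M \<in> (\<lambda>i. a (c i)) ` {..nB}" unfolding M_def by (intro Max_in) auto
  then obtain i0 where i0: "i0 \<le> nB" "a (c i0) = M" by auto
  obtain i1 where i1: "i1 \<le> nB" "c i1 \<noteq> 0" using c(2) by blast
  have "a (c i1) > 0" using i1(2) by simp
  hence "M > 0" using Mge[OF i1(1)] by linarith
  hence ci0: "c i0 \<noteq> 0" using i0 by auto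
  define c' where "c' i = c i / c i0" for i
  have c'K: "c' i \<in> K" if "i \<le> nB" for i unfolding c'_def using c(1) that i0 sf_divide[OF K] by simp
  have c'le: "a (c' i) \<le> 1" if "i \<le> nB" for i
    unfolding c'_def using Mge[OF that] i0 \<open>M > 0\<close> by (simp add: divide_le_eq_1)
  have c'0: "c' i0 = 1" unfolding c'_def using ci0 by simp
  have c'sum: "(\<Sum>i\<le>nB. c' i * z ^ i) = 0"
    unfolding c'_def using c(3) by (simp add: sum_divide_distrib[symmetric] times_divide_eq_left)
  have ex: "\<exists>r. r \<in> R \<and> a (c' i - r) < 1" if "i \<le> nB" for i
    using Rres c'K[OF that] c'le[OF that] by blast
  define \<rho> where "\<rho> i = (SOME r. r \<in> R \<and> a (c' i - r) < 1)" for i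
  have \<rho>: "\<rho> i \<in> R" "a (c' i - \<rho> i) < 1" if "i \<le> nB" for i
    unfolding \<rho>_def using someI_ex[OF ex[OF that]] by auto
  define rr :: "nat \<Rightarrow> 'a" where "rr = (\<lambda>i. if i \<in> {..nB} then \<rho> i else undefined)"
  have rP: "rr \<in> PiE {..nB} (\<lambda>_. R)" unfolding rr_def PiE_def Pi_def extensional_def using \<rho> by auto
  have r_eq: "rr i = \<rho> i" if "i \<le> nB" for i unfolding rr_def using that by simp
  have rle: "a (rr i) \<le> 1" if "i \<le> nB" for i
  proof -
    have "\<rho> i = c' i - (c' i - \<rho> i)" by simp
    hence "a (\<rho> i) \<le> max (a (c' i)) (a (c' i - \<rho> i))" using ultra_diff by metis
    thus ?thesis using r_eq[OF that] c'le[OF that] \<rho>(2)[OF that] by simp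
  qed
  have r0: "a (rr i0) = 1"
  proof -
    have "a (\<rho> i0 - 1) < 1" using \<rho>(2)[OF i0(1)] c'0 diff_comm by metis
    thus ?thesis using unit_of_1unit r_eq[OF i0(1)] by simp
  qed
  define D where "D = {i \<in> {..nB}. a (rr i) = 1}"
  define d where "d = Max D"
  have fD: "finite D" "i0 \<in> D" unfolding D_def using i0 r0 by auto
  have dD: "d \<in> D" unfolding d_def using fD by (intro Max_in) auto
  have dmax: "\<forall>i. d < i \<and> i \<le> nB \<longrightarrow> a (rr i) < 1"
  proof (intro allI impI)
    fix i assume i: "d < i \<and> i \<le> nB"
    have "i \<notin> D" using i fD unfolding d_def using Max_ge leD by blast
    thus "a (rr i) < 1" using rle[of i] i unfolding D_def by auto
  qed
  have "(\<Sum>i\<le>nB. rr i * z ^ i) = (\<Sum>i\<le>nB. (rr i - c' i) * z ^ i) + (\<Sum>i\<le>nB. c' i * z ^ i)"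
    by (simp add: algebra_simps sum.distrib[symmetric])
  also have "\<dots> = (\<Sum>i\<le>nB. (rr i - c' i) * z ^ i)" using c'sum by simp
  finally have "a (\<Sum>i\<le>nB. rr i * z ^ i) < 1"
    using \<rho>(2) r_eq z(2) diff_comm by (auto intro!: sum_less)
  thus ?thesis using rP rle dD dmax unfolding D_def by blast
qed

end


context setting
begin

lemma unit_pow: assumes b: "\<beta> \<in> L" "a \<beta> = 1" shows "\<exists>M>0. a (\<beta> ^ M - 1) < 1"
proof (rule ccontr)
  assume H: "\<not> ?thesis"
  define P where "P z r \<longleftrightarrow> r \<in> PiE {..nB} (\<lambda>_. R) \<and> (\<forall>i\<le>nB. a (r i) \<le> 1) \<and>
     (\<exists>d\<le>nB. a (r d) = 1 \<and> (\<forall>i. d < i \<and> i \<le> nB \<longrightarrow> a (r i) < 1)) \<and>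
     a (\<Sum>i\<le>nB. r i * z ^ i) < 1" for z r
  have exj: "\<exists>r. P (\<beta> ^ j) r" for j
    using red[of "\<beta> ^ j"] sf_power[OF L b(1)] b(2) unfolding P_def by auto
  define F where "F j = (SOME r. P (\<beta> ^ j) r)" for j
  have F: "P (\<beta> ^ j) (F j)" for j unfolding F_def using someI_ex[OF exj] .
  have "F ` UNIV \<subseteq> PiE {..nB} (\<lambda>_. R)" using F unfolding P_def by auto
  moreover have "finite (PiE {..nB} (\<lambda>_. R))" using R(1) by (intro finite_PiE) auto
  ultimately have "finite (F ` UNIV)" using finite_subset by blast
  then obtain j0 where "\<not> finite {j \<in> UNIV. F j = F j0}"
    using pigeonhole_infinite[of "UNIV :: nat set" F] by auto
  then obtain J where J: "finite J" "card J = Suc nB" "J \<subseteq> {j. F j = F j0}"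
    using infinite_arbitrarily_large by (metis (no_types, lifting) Collect_cong UNIV_I)
  define r0 where "r0 = F j0"
  have Pr0: "P (\<beta> ^ j) r0" if "j \<in> J" for j using F[of j] J(3) that unfolding r0_def by auto
  have r0: "\<forall>i\<le>nB. a (r0 i) \<le> 1" "\<exists>d\<le>nB. a (r0 d) = 1 \<and> (\<forall>i. d < i \<and> i \<le> nB \<longrightarrow> a (r0 i) < 1)"
    using F[of j0] unfolding P_def r0_def by auto
  then obtain d where d: "d \<le> nB" "a (r0 d) = 1" "\<forall>i. d < i \<and> i \<le> nB \<longrightarrow> a (r0 i) < 1" by blast
  define f where "f = (\<Sum>i\<le>nB. monom (r0 i) i)"
  have cf: "coeff f k = (if k \<le> nB then r0 k else 0)" for k
    unfolding f_def by (simp add: coeff_sum)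
  have pf: "poly f z = (\<Sum>i\<le>nB. r0 i * z ^ i)" for z
    unfolding f_def by (simp add: poly_sum poly_monom)
  have apow: "a (\<beta> ^ j) = 1" for j using b(2) by simp
  have sep: "\<not> a (\<beta> ^ j - \<beta> ^ j') < 1" if "j < j'" for j j'
  proof -
    have "\<beta> ^ j' - \<beta> ^ j = \<beta> ^ j * (\<beta> ^ (j' - j) - 1)"
      using that by (simp add: algebra_simps flip: power_add)
    hence "a (\<beta> ^ j' - \<beta> ^ j) = a (\<beta> ^ (j' - j) - 1)" using apow by simp
    moreover have "j' - j > 0" using that by simp
    hence "\<not> a (\<beta> ^ (j' - j) - 1) < 1" using H by blast
    ultimately show ?thesis using diff_comm by metis
  qed
  have sep2: "\<not> a (\<beta> ^ j - \<beta> ^ j') < 1" if "j \<noteq> j'" for j j'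
    using sep[of j j'] sep[of j' j] diff_comm that by (metis linorder_neqE_nat)
  have inj: "inj_on (\<lambda>j. \<beta> ^ j) J"
  proof (rule inj_onI)
    fix j j' assume "j \<in> J" "j' \<in> J" "\<beta> ^ j = \<beta> ^ j'"
    thus "j = j'" using sep2[of j j'] by auto
  qed
  define Y where "Y = (\<lambda>j. \<beta> ^ j) ` J"
  have cY: "card Y = Suc nB" unfolding Y_def using card_image[OF inj] J(2) by simp
  have "card Y \<le> d"
  proof (rule ARC[of f d Y])
    show "\<forall>i. a (coeff f i) \<le> 1" using r0(1) cf by simp
    show "a (coeff f d) = 1" using cf d by simp
    show "\<forall>i>d. a (coeff f i) < 1" using cf d by simp
    show "finite Y" unfolding Y_def using J(1) by simp
    show "\<forall>y\<in>Y. a y \<le> 1 \<and> a (poly f y) < 1"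
      unfolding Y_def using Pr0 apow pf unfolding P_def by auto
    show "\<forall>y\<in>Y. \<forall>y'\<in>Y. y \<noteq> y' \<longrightarrow> \<not> a (y - y') < 1"
      unfolding Y_def using sep2 by (metis (no_types, lifting) imageE)
  qed
  thus False using cY d(1) by simp
qed

end


lemma exists_T:
  fixes p b :: nat
  assumes "prime p" "\<not> p dvd b" "b > 0"
  shows "\<exists>c>0. b dvd p ^ c - 1"
proof -
  have "range (\<lambda>i. p ^ i mod b) \<subseteq> {..<b}" using assms(3) by auto
  hence "finite (range (\<lambda>i. p ^ i mod b))" using finite_subset by blast
  hence "\<not> inj (\<lambda>i. p ^ i mod b)" using infinite_UNIV_nat finite_imageD by blast
  then obtain i j where ij0: "p ^ i mod b = p ^ j mod b" "i \<noteq> j" unfolding inj_def by blast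
  have "\<exists>i j. p ^ i mod b = p ^ j mod b \<and> i < j" using ij0 by (metis linorder_neqE_nat)
  then obtain i j where ij: "p ^ i mod b = p ^ j mod b" "i < j" by blast
  have p1: "p > 0" using assms(1) prime_gt_0_nat by blast
  have "p ^ i \<le> p ^ j" using ij(2) p1 by (simp add: power_increasing)
  hence "b dvd p ^ j - p ^ i" using ij(1) mod_eq_dvd_iff_nat by metis
  moreover have "p ^ j - p ^ i = p ^ i * (p ^ (j - i) - 1)"
    using ij(2) by (simp add: diff_mult_distrib2 flip: power_add)
  ultimately have "b dvd p ^ i * (p ^ (j - i) - 1)" by simp
  moreover have "coprime b (p ^ i)"
    using prime_imp_coprime[OF assms(1,2)] by (simp add: coprime_commute)
  ultimately have "b dvd p ^ (j - i) - 1" using coprime_dvd_mult_right_iff by blast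
  thus ?thesis using ij(2) by (intro exI[of _ "j - i"]) auto
qed

lemma dvd_pow_minus1:
  fixes T b k :: nat
  assumes "b dvd T - 1" "T \<ge> 1"
  shows "b dvd T ^ k - 1"
proof -
  have "T mod b = 1 mod b" using assms mod_eq_dvd_iff_nat by metis
  hence "T ^ k mod b = 1 mod b" by (metis power_mod power_one)
  moreover have "T ^ k \<ge> 1" using assms(2) by simp
  ultimately show ?thesis using mod_eq_dvd_iff_nat by metis
qed

context nabs
begin

lemma pow_diff_le: assumes "a x \<le> 1" "a y \<le> 1" shows "a (x ^ n - y ^ n) \<le> a (x - y)"
proof -
  have "a (\<Sum>i<n. y ^ (n - Suc i) * x ^ i) \<le> 1"
    using assms by (intro sum_le) (auto simp: mult_le_one power_le_one)
  hence "a (x - y) * a (\<Sum>i<n. y ^ (n - Suc i) * x ^ i) \<le> a (x - y)"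
    by (simp add: mult_left_le)
  thus ?thesis by (simp add: power_diff_sumr2)
qed

lemma root_unity_abs: assumes "z ^ m = 1" "m > 0" shows "a z = 1"
proof -
  have "a z ^ m = 1 ^ m" using assms(1) by (metis power one power_one)
  thus ?thesis using power_eq_imp_eq_base[of "a z" m 1] assms(2) by simp
qed

end

context setting
begin

lemma teich: assumes b: "\<beta> \<in> K" "a \<beta> = 1"
  shows "\<exists>\<zeta>\<in>K. \<exists>b>0. \<zeta> ^ b = 1 \<and> a (\<zeta> - \<beta>) < 1"
proof -
  obtain M where M: "M > 0" "a (\<beta> ^ M - 1) < 1" using unit_pow[of \<beta>] b KL by blast
  obtain e b where eb: "M = p ^ e * b" "\<not> p dvd b" using decomp[OF M(1)] by blast
  have b0: "b > 0" using eb M(1) by (cases b) auto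
  define \<gamma> where "\<gamma> = \<beta> ^ b"
  have "\<beta> ^ M - 1 = (\<gamma> - 1) ^ (p ^ e)" unfolding \<gamma>_def eb
    by (metis frob1 mult.commute power_mult)
  hence "a (\<gamma> - 1) ^ (p ^ e) < 1" using M(2) by simp
  hence \<rho>1: "a (\<gamma> - 1) < 1" using nonneg by (metis one_le_power not_le)
  define \<rho> where "\<rho> = a (\<gamma> - 1)"
  have \<rho>0: "\<rho> \<ge> 0" "\<rho> < 1" unfolding \<rho>_def using \<rho>1 by auto
  have mulb: "a (\<beta> ^ k - 1) \<le> \<rho>" if bk: "b dvd k" for k
  proof -
    obtain l where "k = b * l" using bk by blast
    hence "\<beta> ^ k = \<gamma> ^ l" unfolding \<gamma>_def by (simp add: power_mult)
    thus ?thesis unfolding \<rho>_def using oneunit_pow_le[OF \<rho>1] by simp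
  qed
  obtain c where c: "c > 0" "b dvd p ^ c - 1" using exists_T[OF prime eb(2) b0] by blast
  define T where "T = p ^ c"
  have "p > 0" using prime prime_gt_0_nat by blast
  hence T1: "T \<ge> 1" unfolding T_def by simp
  have T2: "T \<ge> 2"
  proof -
    have "p \<le> p ^ c" using c(1) \<open>p > 0\<close> self_le_power[of p c] by simp
    moreover have "2 \<le> p" using prime_ge_2_nat[OF prime] .
    ultimately show ?thesis unfolding T_def by linarith
  qed
  have Tk: "b dvd T ^ k - 1" for k using dvd_pow_minus1[OF c(2)[folded T_def] T1] .
  have Tj: "j \<le> T ^ j" for j
  proof -
    have "j < 2 ^ j" by (rule less_exp)
    also have "2 ^ j \<le> T ^ j" using T2 by (rule power_mono) simp
    finally show ?thesis by simp
  qed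
  have Tp: "T ^ j = p ^ (c * j)" for j unfolding T_def by (simp add: power_mult)
  define z where "z j = \<beta> ^ (T ^ j)" for j
  have zK: "z j \<in> K" for j unfolding z_def using sf_power[OF K b(1)] .
  have az: "a (z j) = 1" for j unfolding z_def using b(2) by simp
  have \<rho>pow: "\<rho> ^ (T ^ j) \<le> \<rho> ^ j" for j using \<rho>0 Tj by (intro power_decreasing) auto
  have zdiff: "a (z m - z j) \<le> \<rho> ^ j" if "j \<le> m" for j m
  proof -
    have e1: "T ^ m = T ^ j * T ^ (m - j)" using that by (simp flip: power_add)
    have "T ^ (m - j) \<ge> 1" using T1 by simp
    then obtain t where t: "T ^ (m - j) = Suc t" by (cases "T ^ (m - j)") auto
    have "\<beta> ^ (T ^ j) * (\<beta> ^ (T ^ (m - j) - 1)) ^ (T ^ j) = \<beta> ^ (T ^ j + t * T ^ j)"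
      unfolding t by (simp add: power_add power_mult)
    also have "T ^ j + t * T ^ j = T ^ m" unfolding e1 t by simp
    finally have "\<beta> ^ (T ^ m) = \<beta> ^ (T ^ j) * (\<beta> ^ (T ^ (m - j) - 1)) ^ (T ^ j)" by simp
    hence "z m - z j = z j * ((\<beta> ^ (T ^ (m - j) - 1)) ^ (T ^ j) - 1)"
      unfolding z_def by (simp add: algebra_simps)
    also have "(\<beta> ^ (T ^ (m - j) - 1)) ^ (T ^ j) - 1 = (\<beta> ^ (T ^ (m - j) - 1) - 1) ^ (T ^ j)"
      unfolding Tp by (rule frob1)
    finally have "a (z m - z j) = a (\<beta> ^ (T ^ (m - j) - 1) - 1) ^ (T ^ j)" using az by simp
    also have "\<dots> \<le> \<rho> ^ (T ^ j)" using mulb[OF Tk] by (intro power_mono) auto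
    also have "\<dots> \<le> \<rho> ^ j" by (rule \<rho>pow)
    finally show ?thesis .
  qed
  have small: "\<exists>N. \<forall>j\<ge>N. \<rho> ^ j < e" if e0: "e > 0" for e
  proof (cases "\<rho> = 0")
    case True thus ?thesis using e0 by (intro exI[of _ 1]) (auto simp: power_0_left)
  next
    case False
    obtain N where "\<rho> ^ N < e" using real_arch_pow_inv[OF e0 \<rho>0(2)] by blast
    moreover have "\<rho> ^ j \<le> \<rho> ^ N" if "j \<ge> N" for j using \<rho>0 that by (intro power_decreasing) auto
    ultimately show ?thesis by (meson le_less_trans)
  qed
  have cauchy: "abs_cauchy a z"
    unfolding abs_cauchy_def
  proof (intro allI impI)
    fix e :: real assume e: "e > 0"
    obtain N where N: "\<forall>j\<ge>N. \<rho> ^ j < e" using small[OF e] by blast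
    show "\<exists>N. \<forall>m\<ge>N. \<forall>n\<ge>N. a (z m - z n) < e"
    proof (intro exI[of _ N] allI impI)
      fix m n assume mn: "m \<ge> N" "n \<ge> N"
      show "a (z m - z n) < e"
      proof (cases "n \<le> m")
        case True thus ?thesis using zdiff[OF True] N mn by (meson le_less_trans)
      next
        case False
        hence "a (z n - z m) \<le> \<rho> ^ m" using zdiff by simp
        thus ?thesis using N mn diff_comm by (metis le_less_trans)
      qed
    qed
  qed
  obtain \<zeta> where \<zeta>: "\<zeta> \<in> K" "abs_tendsto a z \<zeta>"
    using compK cauchy zK unfolding abs_complete_def by blast
  have conv: "\<exists>N. \<forall>j\<ge>N. a (z j - \<zeta>) < e" if "e > 0" for e
    using \<zeta>(2) that unfolding abs_tendsto_def by blast
  obtain N1 where N1: "\<forall>j\<ge>N1. a (z j - \<zeta>) < 1" using conv[of 1] by auto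
  have a\<zeta>: "a \<zeta> \<le> 1"
  proof -
    have "\<zeta> = z N1 - (z N1 - \<zeta>)" by simp
    hence "a \<zeta> \<le> max (a (z N1)) (a (z N1 - \<zeta>))" using ultra_diff by metis
    thus ?thesis using az N1 by simp
  qed
  have zb: "a (z j ^ b - 1) \<le> \<rho> ^ j" for j
  proof -
    have "z j ^ b = \<gamma> ^ (T ^ j)" unfolding z_def \<gamma>_def by (simp flip: power_mult add: mult.commute)
    hence "z j ^ b - 1 = (\<gamma> - 1) ^ (T ^ j)" unfolding Tp using frob1 by simp
    hence "a (z j ^ b - 1) = \<rho> ^ (T ^ j)" unfolding \<rho>_def by simp
    thus ?thesis using \<rho>pow by simp
  qed
  have "a (\<zeta> ^ b - 1) = 0"
  proof (rule ccontr)
    assume ne: "a (\<zeta> ^ b - 1) \<noteq> 0"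
    define e where "e = a (\<zeta> ^ b - 1)"
    have e: "e > 0" using ne nonneg unfolding e_def by (simp add: less_le)
    obtain N2 where N2: "\<forall>j\<ge>N2. a (z j - \<zeta>) < e" using conv[OF e] by blast
    obtain N3 where N3: "\<forall>j\<ge>N3. \<rho> ^ j < e" using small[OF e] by blast
    define j where "j = max N2 N3"
    have "a (z j ^ b - \<zeta> ^ b) \<le> a (z j - \<zeta>)" using az a\<zeta> by (intro pow_diff_le) auto
    hence h1: "a (\<zeta> ^ b - z j ^ b) < e" using N2 diff_comm unfolding j_def by (metis max.cobounded1 le_less_trans)
    have h2: "a (z j ^ b - 1) < e" using zb[of j] N3 unfolding j_def by (meson max.cobounded2 le_less_trans)
    have "\<zeta> ^ b - 1 = (\<zeta> ^ b - z j ^ b) + (z j ^ b - 1)" by simp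
    hence "a (\<zeta> ^ b - 1) \<le> max (a (\<zeta> ^ b - z j ^ b)) (a (z j ^ b - 1))" using ultra by metis
    thus False using h1 h2 unfolding e_def by simp
  qed
  hence \<zeta>b: "\<zeta> ^ b = 1" by simp
  have "a (\<zeta> - \<beta>) < 1"
  proof -
    have zjb: "a (z N1 - \<beta>) \<le> \<rho>"
    proof -
      have "T ^ N1 \<ge> 1" using T1 by simp
      then obtain t where t: "T ^ N1 = Suc t" by (cases "T ^ N1") auto
      have "z N1 - \<beta> = \<beta> * (\<beta> ^ (T ^ N1 - 1) - 1)" unfolding z_def t
        by (simp add: algebra_simps)
      thus ?thesis using mulb[OF Tk] b(2) by simp
    qed
    have "\<zeta> - \<beta> = (z N1 - \<beta>) - (z N1 - \<zeta>)" by simp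
    hence "a (\<zeta> - \<beta>) \<le> max (a (z N1 - \<beta>)) (a (z N1 - \<zeta>))" using ultra_diff by metis
    moreover have "a (z N1 - \<zeta>) < 1" using N1 by simp
    ultimately show ?thesis using zjb \<rho>0 by linarith
  qed
  thus ?thesis using \<zeta>(1) \<zeta>b b0 by blast
qed

end


context nabs
begin

lemma lim_unique: assumes "abs_tendsto a X l1" "abs_tendsto a X l2" shows "l1 = l2"
proof (rule ccontr)
  assume ne: "l1 \<noteq> l2"
  define e where "e = a (l1 - l2)"
  have e: "e > 0" using ne unfolding e_def by simp
  obtain N1 where N1: "\<forall>n\<ge>N1. a (X n - l1) < e" using assms(1) e unfolding abs_tendsto_def by blast
  obtain N2 where N2: "\<forall>n\<ge>N2. a (X n - l2) < e" using assms(2) e unfolding abs_tendsto_def by blast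
  define n where "n = max N1 N2"
  have h1: "a (X n - l1) < e" "a (X n - l2) < e" using N1 N2 unfolding n_def by auto
  have "l1 - l2 = (X n - l2) - (X n - l1)" by simp
  hence "a (l1 - l2) \<le> max (a (X n - l2)) (a (X n - l1))" using ultra_diff by metis
  thus False using h1 unfolding e_def by simp
qed

end

context setting
begin

lemma one_in_roots: "1 \<in> roots_of_unity K"
  unfolding roots_of_unity_def using sf_1[OF K] by (auto intro: exI[of _ 1])

lemma decompK: assumes "\<alpha> \<in> K" "\<alpha> \<noteq> 0"
  shows "\<exists>n::int. \<exists>\<zeta>\<in>roots_of_unity K. \<exists>u\<in>one_units a K. \<alpha> = \<zeta> * \<pi> powi n * u"
proof -
  obtain n where n: "a \<alpha> = a \<pi> powi n" using pi_val assms by blast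
  define \<beta> where "\<beta> = \<alpha> * \<pi> powi (-n)"
  have bK: "\<beta> \<in> K" unfolding \<beta>_def using assms(1) sf_mult[OF K] sf_powi[OF K piK] by blast
  have ab: "a \<beta> = 1" unfolding \<beta>_def using n pi_pos by (simp add: power_int_minus)
  obtain \<zeta> b where z: "\<zeta> \<in> K" "b > 0" "\<zeta> ^ b = 1" "a (\<zeta> - \<beta>) < 1" using teich[OF bK ab] by blast
  have az: "a \<zeta> = 1" using root_unity_abs z by blast
  hence z0: "\<zeta> \<noteq> 0" by auto
  define u where "u = \<beta> / \<zeta>"
  have "u - 1 = (\<beta> - \<zeta>) / \<zeta>" unfolding u_def using z0 by (simp add: field_simps)
  hence "a (u - 1) < 1" using az z(4) diff_comm by (metis divide div_by_1)
  moreover have "u \<in> K" unfolding u_def using bK z(1) sf_divide[OF K] by blast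
  ultimately have uU: "u \<in> one_units a K" unfolding one_units_def by simp
  have zr: "\<zeta> \<in> roots_of_unity K" unfolding roots_of_unity_def using z by blast
  have "\<alpha> = \<beta> * \<pi> powi n" unfolding \<beta>_def using pi_nz by (simp add: power_int_minus)
  also have "\<dots> = \<zeta> * \<pi> powi n * u" unfolding u_def using z0 by (simp add: field_simps)
  finally show ?thesis using zr uU by blast
qed

lemma decomp_uniq:
  assumes "\<zeta> ^ m = 1" "m > 0" "\<zeta>' ^ m' = 1" "m' > 0" "a (u - 1) < 1" "a (u' - 1) < 1"
    and eq: "\<zeta> * \<pi> powi n * u = \<zeta>' * \<pi> powi n' * u'"
  shows "u = u'"
proof -
  have a1: "a \<zeta> = 1" "a \<zeta>' = 1" using root_unity_abs assms(1-4) by blast+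
  have a2: "a u = 1" "a u' = 1" using unit_of_1unit assms(5,6) by blast+
  have "a (\<zeta> * \<pi> powi n * u) = a (\<zeta>' * \<pi> powi n' * u')" using eq by simp
  hence "a \<pi> powi n = a \<pi> powi n'" using a1 a2 by simp
  hence nn: "n = n'" using powi_inj by blast
  have pz: "\<pi> powi n \<noteq> 0" using pi_nz by simp
  have z0: "\<zeta> \<noteq> 0" "u' \<noteq> 0" using a1 a2 by auto
  have "\<zeta> * u = \<zeta>' * u'" using eq nn pz pi_nz by (simp add: mult.commute mult.left_commute)
  hence v: "u / u' = \<zeta>' / \<zeta>" using z0 by (simp add: field_simps)
  have "(\<zeta>' / \<zeta>) ^ (m * m') = 1"
  proof -
    have "\<zeta>' ^ (m * m') = 1" using assms(3) by (metis mult.commute power_mult power_one)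
    moreover have "\<zeta> ^ (m * m') = 1" using assms(1) by (metis power_mult power_one)
    ultimately show ?thesis by (simp add: power_divide)
  qed
  hence "(u / u') ^ (m * m') = 1" using v by simp
  moreover have "a (u / u' - 1) < 1" using oneunit_div assms(5,6) by blast
  moreover have "m * m' > 0" using assms(2,4) by simp
  ultimately have "u / u' = 1" using lemmaA by blast
  thus ?thesis using z0 by simp
qed

lemma pi_char_eq:
  assumes "\<zeta> \<in> roots_of_unity K" "u \<in> one_units a K" "\<alpha> = \<zeta> * \<pi> powi n * u"
  shows "pi_char a K \<pi> \<alpha> = u"
  unfolding pi_char_def
proof (rule the_equality)
  show "u \<in> one_units a K \<and> (\<exists>n::int. \<exists>\<zeta>\<in>roots_of_unity K. \<alpha> = \<zeta> * \<pi> powi n * u)"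
    using assms by blast
next
  fix u' assume "u' \<in> one_units a K \<and> (\<exists>n::int. \<exists>\<zeta>\<in>roots_of_unity K. \<alpha> = \<zeta> * \<pi> powi n * u')"
  then obtain n' \<zeta>' where h: "u' \<in> one_units a K" "\<zeta>' \<in> roots_of_unity K" "\<alpha> = \<zeta>' * \<pi> powi n' * u'" by blast
  obtain m where m: "m > 0" "\<zeta> ^ m = 1" using assms(1) unfolding roots_of_unity_def by blast
  obtain m' where m': "m' > 0" "\<zeta>' ^ m' = 1" using h(2) unfolding roots_of_unity_def by blast
  show "u' = u"
    using decomp_uniq[OF m'(2) m'(1) m(2) m(1), of u' u n' n] h assms unfolding one_units_def by auto
qed

definition Rel where
  "Rel x w \<longleftrightarrow> a (w - 1) < 1 \<and> (\<exists>N>0. \<exists>k::int. x ^ N = \<pi> powi k * w ^ N)"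

lemma Rel_uniq: assumes "Rel x w" "Rel x w'" shows "w = w'"
proof -
  obtain N k where N: "N > 0" "x ^ N = \<pi> powi k * w ^ N" "a (w - 1) < 1" using assms(1) unfolding Rel_def by blast
  obtain N' k' where N': "N' > 0" "x ^ N' = \<pi> powi k' * w' ^ N'" "a (w' - 1) < 1" using assms(2) unfolding Rel_def by blast
  have e1: "x ^ (N * N') = \<pi> powi (k * int N') * w ^ (N * N')"
    using N(2) by (simp add: power_mult power_mult_distrib power_int_power')
  have e2: "x ^ (N * N') = \<pi> powi (k' * int N) * w' ^ (N * N')"
    using N'(2) by (simp add: power_mult power_mult_distrib power_int_power' mult.commute[of N N'])
  have aw: "a w = 1" "a w' = 1" using unit_of_1unit N(3) N'(3) by blast+
  have "a (\<pi> powi (k * int N') * w ^ (N * N')) = a (\<pi> powi (k' * int N) * w' ^ (N * N'))" using e1 e2 by simp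
  hence "a \<pi> powi (k * int N') = a \<pi> powi (k' * int N)" using aw by simp
  hence "k * int N' = k' * int N" using powi_inj by blast
  hence "w ^ (N * N') = w' ^ (N * N')" using e1 e2 pi_nz by simp
  moreover have "w' \<noteq> 0" using aw by auto
  ultimately have "(w / w') ^ (N * N') = 1" by (simp add: power_divide)
  moreover have "a (w / w' - 1) < 1" using oneunit_div N(3) N'(3) by blast
  moreover have "N * N' > 0" using N N' by simp
  ultimately have "w / w' = 1" using lemmaA by blast
  thus ?thesis using aw by (simp add: divide_eq_1_iff)
qed

lemma Rel_ex: assumes "x \<in> L" "x \<noteq> 0" shows "\<exists>w. Rel x w"
proof -
  obtain m k where mk: "m > 0" "a x ^ m = a \<pi> powi k" using val_rat[OF assms] by blast
  define \<beta> where "\<beta> = x ^ m * \<pi> powi (-k)"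
  have bL: "\<beta> \<in> L" unfolding \<beta>_def using assms(1) piK KL sf_power[OF L] sf_mult[OF L] sf_powi[OF L] by blast
  have ab: "a \<beta> = 1" unfolding \<beta>_def using mk pi_pos by (simp add: power_int_minus)
  obtain M where M: "M > 0" "a (\<beta> ^ M - 1) < 1" using unit_pow[OF bL ab] by blast
  obtain w where w: "a (w - 1) < 1" "w ^ (m * M) = \<beta> ^ M" using root_1unit[OF ac M(2), of "m * M"] mk M by auto
  have "x ^ m = \<beta> * \<pi> powi k" unfolding \<beta>_def using pi_nz by (simp add: power_int_minus)
  hence "x ^ (m * M) = \<beta> ^ M * \<pi> powi (k * int M)" by (simp add: power_mult power_mult_distrib power_int_power')
  hence "x ^ (m * M) = \<pi> powi (k * int M) * w ^ (m * M)" using w(2) by simp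
  moreover have "m * M > 0" using mk M by simp
  ultimately show ?thesis unfolding Rel_def using w(1) by blast
qed

definition sL where "sL x = (THE w. Rel x w)"

lemma sL_Rel: assumes "x \<in> L" "x \<noteq> 0" shows "Rel x (sL x)"
proof -
  obtain w where "Rel x w" using Rel_ex[OF assms] by blast
  thus ?thesis unfolding sL_def using Rel_uniq by (metis theI)
qed

lemma sL_eq: assumes "x \<in> L" "x \<noteq> 0" "Rel x w" shows "sL x = w"
  using Rel_uniq sL_Rel assms by blast

lemma Rel_mult: assumes "Rel x w" "Rel y w'" shows "Rel (x * y) (w * w')"
proof -
  obtain N k where N: "N > 0" "x ^ N = \<pi> powi k * w ^ N" "a (w - 1) < 1" using assms(1) unfolding Rel_def by blast
  obtain N' k' where N': "N' > 0" "y ^ N' = \<pi> powi k' * w' ^ N'" "a (w' - 1) < 1" using assms(2) unfolding Rel_def by blast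
  have e1: "x ^ (N * N') = \<pi> powi (k * int N') * w ^ (N * N')"
    using N(2) by (simp add: power_mult power_mult_distrib power_int_power')
  have e2: "y ^ (N * N') = \<pi> powi (k' * int N) * w' ^ (N * N')"
    using N'(2) by (simp add: power_mult power_mult_distrib power_int_power' mult.commute[of N N'])
  have "(x * y) ^ (N * N') = \<pi> powi (k * int N' + k' * int N) * (w * w') ^ (N * N')"
    using e1 e2 pi_nz by (simp add: power_mult_distrib power_int_add)
  moreover have "a (w * w' - 1) < 1" using oneunit_mult N(3) N'(3) by blast
  moreover have "N * N' > 0" using N N' by simp
  ultimately show ?thesis unfolding Rel_def by blast
qed

lemma Rel_root: assumes "z ^ m = 1" "m > 0" shows "Rel z 1"
  unfolding Rel_def using assms by (intro conjI exI[of _ m] exI[of _ 0]) auto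

lemma Rel_unit: assumes "a (u - 1) < 1" shows "Rel u u"
  unfolding Rel_def using assms by (intro conjI exI[of _ 1] exI[of _ 0]) auto

lemma Rel_K: assumes "\<zeta> \<in> roots_of_unity K" "\<alpha> = \<zeta> * \<pi> powi n * u" "a (u - 1) < 1"
  shows "Rel \<alpha> u"
proof -
  obtain m where m: "m > 0" "\<zeta> ^ m = 1" using assms(1) unfolding roots_of_unity_def by blast
  have "\<alpha> ^ m = \<pi> powi (n * int m) * u ^ m" using assms(2) m(2)
    by (simp add: power_mult_distrib power_int_power')
  thus ?thesis unfolding Rel_def using m(1) assms(3) by blast
qed

end


context setting
begin

lemma s'_unit:
  assumes cs: "char_S a p L s'" and ag: "\<forall>\<alpha>\<in>K - {0}. s' \<alpha> = pi_char a K \<pi> \<alpha>"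
    and u: "u \<in> one_units a L"
  shows "s' u = u"
proof -
  obtain y' where y': "\<forall>u\<in>one_units a L. abs_tendsto a (\<lambda>n. u ^ nat (y' n)) (s' u)"
    using cs unfolding char_S_def by blast
  define mm where "mm n = nat (y' n)" for n
  define v where "v = 1 + \<pi>"
  have vK: "v \<in> K" unfolding v_def using sf_add[OF K sf_1[OF K] piK] .
  have v1: "a (v - 1) = a \<pi>" unfolding v_def by simp
  hence v1': "a (v - 1) < 1" using pi_lt1 by simp
  have av: "a v = 1" using unit_of_1unit[OF v1'] .
  have vU: "v \<in> one_units a K" unfolding one_units_def using vK v1' by simp
  have "v \<in> K - {0}" using vK av by auto
  hence "s' v = pi_char a K \<pi> v" using ag by blast
  also have "\<dots> = v" using pi_char_eq[OF one_in_roots vU, of v 0] by simp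
  finally have sv: "s' v = v" .
  have "v \<in> one_units a L" using vU KL unfolding one_units_def by auto
  hence tv: "abs_tendsto a (\<lambda>n. v ^ mm n) v" using y' sv unfolding mm_def by metis
  have uL: "a (u - 1) < 1" using u unfolding one_units_def by simp
  have au: "a u = 1" using unit_of_1unit[OF uL] .
  have tu: "abs_tendsto a (\<lambda>n. u ^ mm n) u"
    unfolding abs_tendsto_def
  proof (intro allI impI)
    fix e :: real assume e: "e > 0"
    show "\<exists>N. \<forall>n\<ge>N. a (u ^ mm n - u) < e"
    proof (cases "u = 1")
      case True thus ?thesis using e by simp
    next
      case False
      define \<delta> where "\<delta> = a (u - 1)"
      have \<delta>: "\<delta> > 0" "\<delta> < 1" unfolding \<delta>_def using False uL by auto
      obtain A where A: "\<delta> ^ A < e" using real_arch_pow_inv[OF e \<delta>(2)] by blast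
      define \<rho> where "\<rho> = a \<pi>"
      have \<rho>: "\<rho> > 0" "\<rho> < 1" unfolding \<rho>_def using pi_pos pi_lt1 by auto
      have p1: "p > 0" using prime prime_gt_0_nat by blast
      have "\<rho> ^ (p ^ A) > 0" using \<rho> by simp
      then obtain N0 where N0: "\<forall>n\<ge>N0. a (v ^ mm n - v) < \<rho> ^ (p ^ A)"
        using tv unfolding abs_tendsto_def by blast
      have rpA: "\<rho> ^ (p ^ A) \<le> \<rho> ^ 1" using \<rho> p1 by (intro power_decreasing) auto
      have ApA: "A \<le> p ^ A"
      proof -
        have "A < 2 ^ A" by (rule less_exp)
        also have "2 ^ A \<le> p ^ A" using prime_ge_2_nat[OF prime] by (rule power_mono) simp
        finally show ?thesis by simp
      qed
      show ?thesis
      proof (intro exI[of _ N0] allI impI)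
        fix n assume n: "n \<ge> N0"
        have h: "a (v ^ mm n - v) < \<rho> ^ (p ^ A)" using N0 n by blast
        have "mm n \<noteq> 0"
        proof
          assume "mm n = 0"
          hence "a (v ^ mm n - v) = \<rho>" using v1 diff_comm unfolding \<rho>_def by (metis power_0)
          thus False using h rpA by simp
        qed
        then obtain t where t: "mm n = Suc t" by (cases "mm n") auto
        have hv: "a (v ^ mm n - v) = a (v ^ t - 1)"
        proof -
          have "v ^ mm n - v = v * (v ^ t - 1)" unfolding t by (simp add: algebra_simps)
          thus ?thesis using av by simp
        qed
        have hu: "a (u ^ mm n - u) = a (u ^ t - 1)"
        proof -
          have "u ^ mm n - u = u * (u ^ t - 1)" unfolding t by (simp add: algebra_simps)
          thus ?thesis using au by simp
        qed
        show "a (u ^ mm n - u) < e"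
        proof (cases "t = 0")
          case True thus ?thesis using hu e by simp
        next
          case False
          obtain E c where Ec: "t = p ^ E * c" "\<not> p dvd c" using decomp[of t] False by blast
          have "a (v ^ t - 1) = \<rho> ^ (p ^ E)" unfolding Ec \<rho>_def using KLp[OF v1' Ec(2)] v1 by simp
          hence hv2: "\<rho> ^ (p ^ E) < \<rho> ^ (p ^ A)" using h hv by simp
          have "p ^ A < p ^ E"
          proof (rule ccontr)
            assume "\<not> p ^ A < p ^ E"
            hence "p ^ E \<le> p ^ A" by simp
            hence "\<rho> ^ (p ^ A) \<le> \<rho> ^ (p ^ E)" using power_decreasing[of "p ^ E" "p ^ A" \<rho>] \<rho> by simp
            thus False using hv2 by simp
          qed
          hence "A \<le> p ^ E" using ApA by simp
          hence "\<delta> ^ (p ^ E) \<le> \<delta> ^ A" using power_decreasing[of A "p ^ E" \<delta>] \<delta> by simp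
          moreover have "a (u ^ t - 1) = \<delta> ^ (p ^ E)" unfolding Ec \<delta>_def using KLp[OF uL Ec(2)] by simp
          ultimately show ?thesis using hu A by simp
        qed
      qed
    qed
  qed
  have "abs_tendsto a (\<lambda>n. u ^ mm n) (s' u)" using y' u unfolding mm_def by blast
  thus ?thesis using lim_unique tu by blast
qed

end


theorem proposition2p8:
  fixes a :: "'a::field \<Rightarrow> real" and p :: nat and K L :: "'a set" and \<pi> :: 'a
  assumes "prime p" and "CHAR('a) = p"
    and "nonarch_abs a" and "alg_closed TYPE('a)" and "abs_complete a UNIV"
    and "is_subfield K" and "abs_complete a K" and "uniformizer a K \<pi>" and "finite_residue a K"
    and "\<forall>x. \<forall>e>0. \<exists>y. algebraic_over K y \<and> a (x - y) < e"
    and "is_subfield L" and "K \<subseteq> L" and "finite_ext K L"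
  shows "\<exists>s. char_S a p L s \<and> (\<forall>x\<in>L - {0}. s x \<in> one_units a UNIV)
            \<and> (\<forall>\<alpha>\<in>K - {0}. s \<alpha> = pi_char a K \<pi> \<alpha>)
            \<and> (\<forall>s'. char_S a p L s' \<and> (\<forall>x\<in>L - {0}. s' x \<in> one_units a UNIV)
                    \<and> (\<forall>\<alpha>\<in>K - {0}. s' \<alpha> = pi_char a K \<pi> \<alpha>)
                 \<longrightarrow> (\<forall>x\<in>L - {0}. s' x = s x))"
proof -
  obtain B where B: "finite B" "L = {\<Sum>b\<in>B. c b * b | c. \<forall>b\<in>B. c b \<in> K}"
    using assms(13) unfolding finite_ext_def by blast
  obtain R where R: "finite R" "R \<subseteq> K" "\<forall>x\<in>K. a x \<le> 1 \<longrightarrow> (\<exists>r\<in>R. a (x - r) < 1)"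
    using assms(9) unfolding finite_residue_def by blast
  interpret setting a p K L \<pi> B R
    by unfold_locales (use assms B R in auto)
  have sne: "sL x \<noteq> 0" "a (sL x - 1) < 1" if "x \<in> L - {0}" for x
    using sL_Rel[of x] that unit_of_1unit unfolding Rel_def by fastforce+
  have sunit: "sL u = u" if "u \<in> one_units a L" for u
  proof -
    have "a (u - 1) < 1" "u \<in> L" using that unfolding one_units_def by auto
    moreover have "u \<noteq> 0" using unit_of_1unit[OF calculation(1)] by auto
    ultimately show ?thesis using sL_eq Rel_unit by blast
  qed
  have C1: "char_S a p L sL"
    unfolding char_S_def
  proof (intro conjI ballI)
    fix x assume "x \<in> L - {0}" thus "sL x \<noteq> 0" using sne by blast
  next
    fix x y assume xy: "x \<in> L - {0}" "y \<in> L - {0}"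
    hence "x * y \<in> L - {0}" using sf_mult[OF L] by auto
    moreover have "Rel (x * y) (sL x * sL y)" using Rel_mult sL_Rel xy by blast
    ultimately show "sL (x * y) = sL x * sL y" using sL_eq by blast
  next
    fix z assume "z \<in> roots_of_unity L"
    then obtain m where m: "z \<in> L" "m > 0" "z ^ m = 1" unfolding roots_of_unity_def by blast
    hence "z \<noteq> 0" by (auto simp: power_0_left)
    thus "sL z = 1" using sL_eq[OF m(1) _ Rel_root[OF m(3,2)]] by blast
  next
    define y where "y n = (if n = 0 then 0 else 1 :: int)" for n :: nat
    have "y \<in> zp p"
      unfolding zp_def
    proof (intro CollectI allI conjI)
      fix n
      show "0 \<le> y n" unfolding y_def by simp
      have "p ^ n > 1" if "n > 0" using prime_gt_1_nat[OF prime] that by (metis one_less_power)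
      thus "y n < int p ^ n" unfolding y_def by (cases "n = 0") (auto simp flip: of_nat_power)
      show "y (Suc n) mod int p ^ n = y n"
        unfolding y_def using \<open>n > 0 \<Longrightarrow> p ^ n > 1\<close>
        by (cases "n = 0") (auto simp flip: of_nat_power)
    qed
    moreover have "\<forall>u\<in>one_units a L. abs_tendsto a (\<lambda>n. u ^ nat (y n)) (sL u)"
    proof
      fix u assume u: "u \<in> one_units a L"
      show "abs_tendsto a (\<lambda>n. u ^ nat (y n)) (sL u)"
        unfolding abs_tendsto_def sunit[OF u] y_def by (intro allI impI exI[of _ 1]) auto
    qed
    ultimately show "\<exists>y\<in>zp p. \<forall>u\<in>one_units a L. abs_tendsto a (\<lambda>n. u ^ nat (y n)) (sL u)" by blast
  qed
  have C2: "\<forall>x\<in>L - {0}. sL x \<in> one_units a UNIV"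
    using sne unfolding one_units_def by blast
  have C3: "\<forall>\<alpha>\<in>K - {0}. sL \<alpha> = pi_char a K \<pi> \<alpha>"
  proof
    fix \<alpha> assume \<alpha>: "\<alpha> \<in> K - {0}"
    then obtain n \<zeta> u where d: "\<zeta> \<in> roots_of_unity K" "u \<in> one_units a K" "\<alpha> = \<zeta> * \<pi> powi n * u"
      using decompK by blast
    have "Rel \<alpha> u" using Rel_K[OF d(1) d(3)] d(2) unfolding one_units_def by blast
    hence "sL \<alpha> = u" using sL_eq \<alpha> KL by blast
    thus "sL \<alpha> = pi_char a K \<pi> \<alpha>" using pi_char_eq[OF d] by simp
  qed
  have C4: "\<forall>x\<in>L - {0}. s' x = sL x"
    if H: "char_S a p L s' \<and> (\<forall>x\<in>L - {0}. s' x \<in> one_units a UNIV) \<and> (\<forall>\<alpha>\<in>K - {0}. s' \<alpha> = pi_char a K \<pi> \<alpha>)"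
    for s'
  proof
    fix x assume x: "x \<in> L - {0}"
    have cs: "char_S a p L s'" and s1: "\<forall>x\<in>L - {0}. s' x \<in> one_units a UNIV"
      and ag: "\<forall>\<alpha>\<in>K - {0}. s' \<alpha> = pi_char a K \<pi> \<alpha>" using H by auto
    have smul: "s' (x * y) = s' x * s' y" if "x \<in> L - {0}" "y \<in> L - {0}" for x y
      using cs that unfolding char_S_def by blast
    have s1': "s' 1 = 1"
    proof -
      have "1 \<in> roots_of_unity L" unfolding roots_of_unity_def using sf_1[OF L] by (auto intro: exI[of _ 1])
      thus ?thesis using cs unfolding char_S_def by blast
    qed
    have spow: "s' (y ^ N) = s' y ^ N" if "y \<in> L - {0}" for y N
    proof (induct N)
      case 0 then show ?case using s1' by simp
    next
      case (Suc N)
      have "y ^ N \<in> L - {0}" using that sf_power[OF L] by auto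
      then show ?case using smul[OF that] Suc by simp
    qed
    define w where "w = sL x"
    obtain N k where N: "N > 0" "x ^ N = \<pi> powi k * w ^ N" and w1: "a (w - 1) < 1"
      using sL_Rel[of x] x unfolding Rel_def w_def by auto
    have pk0: "\<pi> powi k \<noteq> 0" using pi_nz by simp
    have wN: "w ^ N = x ^ N * \<pi> powi (-k)" using N(2) pk0 by (simp add: power_int_minus field_simps)
    have wNL: "w ^ N \<in> L" unfolding wN using x piK KL sf_power[OF L] sf_mult[OF L] sf_powi[OF L] by blast
    have wNu: "w ^ N \<in> one_units a L" unfolding one_units_def using wNL oneunit_pow[OF w1] by simp
    have "a (w ^ N) = 1" using unit_of_1unit[OF oneunit_pow[OF w1, of N]] .
    hence "w ^ N \<noteq> 0" by (metis a0 zero_neq_one)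
    hence wN0: "w ^ N \<in> L - {0}" using wNL by blast
    have pkK: "\<pi> powi k \<in> K - {0}" using sf_powi[OF K piK] pk0 by simp
    have "s' (\<pi> powi k) = pi_char a K \<pi> (\<pi> powi k)" using ag pkK by blast
    also have "\<dots> = 1"
      by (rule pi_char_eq[OF one_in_roots, of 1 _ k]) (auto simp: one_units_def sf_1[OF K])
    finally have spk: "s' (\<pi> powi k) = 1" .
    have "s' x ^ N = s' (x ^ N)" using spow x by simp
    also have "\<dots> = s' (\<pi> powi k) * s' (w ^ N)" unfolding N(2) using smul pkK wN0 KL by blast
    also have "\<dots> = w ^ N" using spk s'_unit[OF cs ag wNu] by simp
    finally have eqN: "s' x ^ N = w ^ N" .
    have sx1: "a (s' x - 1) < 1" using s1 x unfolding one_units_def by blast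
    have aw: "a w = 1" using unit_of_1unit[OF w1] .
    hence "w \<noteq> 0" by (metis a0 zero_neq_one)
    hence "(s' x / w) ^ N = 1" using eqN by (simp add: power_divide)
    moreover have "a (s' x / w - 1) < 1" using oneunit_div[OF sx1 w1] .
    ultimately have "s' x / w = 1" using lemmaA N(1) by blast
    thus "s' x = sL x" using aw unfolding w_def by (simp add: divide_eq_1_iff)
  qed
  show ?thesis using C1 C2 C3 C4 by blast
qed

end
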